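(* Let $B_J=L+U\in\mathbb R^{n\times n}$ with $L$ strictly lower triangular, $U$ strictly upper triangular, $L\ne O$ and $U^{(j)}_c\ne O$ for all $j=2,\dots,n$. Then the iteration matrix $T(\mathcal B_{FUTC})$ of the splitting $\mathcal B_{FUTC}=(U^{(n)}_c,U^{(n-1)}_c,\dots,U^{(2)}_c,L)$ and the backward Gauss–Seidel iteration matrix $B_{bGS}=(I-U)^{-1}L$ have the same nonzero eigenvalues.
   Context: For $j\in\{2,\dots,n\}$, $U^{(j)}_c$ is the $n\times n$ matrix whose $j$-th column agrees with the $j$-th column of $U$ in rows $i\le j-1$ and which is zero elsewhere (the $j$-th column of $U$). For $B\in\mathbb R^{n\times n}$, a splitting of $B$ of order $d\ge1$ is an ordered $d$-tuple $\mathcal B=(B_1,\dots,B_d)$ of real $n\times n$ matrices with $B_p\neq O$ for all $p$, $\sum_{p=1}^d B_p=B$, and $B_p\circ B_q=O$ (Hadamard product) for $p\ne q$. The iteration matrix of $\mathcal B$ is the $dn\times dn$ matrix $T(\mathcal B)=(I_{dn}-\mathcal L)^{-1}\mathcal U$, where $\mathcal L,\mathcal U$ are $d\times d$ block matrices with $n\times n$ blocks, $\mathcal L_{ij}=B_j$ if $i>j$ and $O$ otherwise, $\mathcal U_{ij}=B_j$ if $i\le j$ and $O$ otherwise. *)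

theory Defs
  imports "Jordan_Normal_Form.Char_Poly"
begin

text \<open>Matrices are Jordan_Normal_Form matrices (type 'a mat with explicit dimensions).
  Indices are 0-based; the paper's index j in 1..n corresponds to j-1 here.\<close>

definition mat_inv :: "'a :: field mat \<Rightarrow> 'a mat" where
  "mat_inv A = (SOME B. B \<in> carrier_mat (dim_row A) (dim_row A) \<and>
                        A * B = 1\<^sub>m (dim_row A) \<and> B * A = 1\<^sub>m (dim_row A))"

definition strictly_lower :: "nat \<Rightarrow> 'a :: zero mat \<Rightarrow> bool" where
  "strictly_lower n A \<longleftrightarrow> A \<in> carrier_mat n n \<and> (\<forall>i<n. \<forall>j<n. i \<le> j \<longrightarrow> A $$ (i,j) = 0)"

definition strictly_upper :: "nat \<Rightarrow> 'a :: zero mat \<Rightarrow> bool" where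
  "strictly_upper n A \<longleftrightarrow> A \<in> carrier_mat n n \<and> (\<forall>i<n. \<forall>j<n. j \<le> i \<longrightarrow> A $$ (i,j) = 0)"

text \<open>U_c^(j) (paper's 1-based j): keep column j of U in rows 1..j-1, zero elsewhere.\<close>
definition col_part :: "nat \<Rightarrow> 'a :: zero mat \<Rightarrow> nat \<Rightarrow> 'a mat" where
  "col_part n U j = mat n n (\<lambda>(i,k). if k = j - 1 \<and> i < j - 1 then U $$ (i,k) else 0)"

definition is_splitting :: "nat \<Rightarrow> 'a :: ring mat \<Rightarrow> 'a mat list \<Rightarrow> bool" where
  "is_splitting n B Bs \<longleftrightarrow> length Bs \<ge> 1 \<and>
     (\<forall>p<length Bs. Bs ! p \<in> carrier_mat n n \<and> Bs ! p \<noteq> 0\<^sub>m n n) \<and>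
     foldr (+) Bs (0\<^sub>m n n) = B \<and>
     (\<forall>p<length Bs. \<forall>q<length Bs. p \<noteq> q \<longrightarrow>
        (\<forall>i<n. \<forall>j<n. Bs ! p $$ (i,j) * Bs ! q $$ (i,j) = 0))"

definition block_mat :: "nat \<Rightarrow> nat \<Rightarrow> (nat \<Rightarrow> nat \<Rightarrow> 'a mat) \<Rightarrow> 'a mat" where
  "block_mat d n F = mat (d*n) (d*n) (\<lambda>(i,j). F (i div n) (j div n) $$ (i mod n, j mod n))"

definition calL :: "nat \<Rightarrow> 'a :: zero mat list \<Rightarrow> 'a mat" where
  "calL n Bs = block_mat (length Bs) n (\<lambda>i j. if i > j then Bs ! j else 0\<^sub>m n n)"

definition calU :: "nat \<Rightarrow> 'a :: zero mat list \<Rightarrow> 'a mat" where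
  "calU n Bs = block_mat (length Bs) n (\<lambda>i j. if i \<le> j then Bs ! j else 0\<^sub>m n n)"

definition iter_mat :: "nat \<Rightarrow> 'a :: field mat list \<Rightarrow> 'a mat" where
  "iter_mat n Bs = mat_inv (1\<^sub>m (length Bs * n) - calL n Bs) * calU n Bs"

definition futc_splitting :: "nat \<Rightarrow> 'a :: zero mat \<Rightarrow> 'a mat \<Rightarrow> 'a mat list" where
  "futc_splitting n L U = map (\<lambda>k. col_part n U (n - k)) [0..<n-1] @ [L]"

definition bGS :: "nat \<Rightarrow> 'a :: field mat \<Rightarrow> 'a mat \<Rightarrow> 'a mat" where
  "bGS n L U = mat_inv (1\<^sub>m n - U) * L"

end

theory Submission
  imports Defs
begin

lemma mat_inv_props:
  fixes A :: "'a::field mat"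
  assumes A: "A \<in> carrier_mat m m" and d: "det A \<noteq> 0"
  shows "mat_inv A \<in> carrier_mat m m \<and> A * mat_inv A = 1\<^sub>m m \<and> mat_inv A * A = 1\<^sub>m m"
proof -
  from det_non_zero_imp_unit[OF A d, of "()"] obtain B where
    "B \<in> carrier_mat m m" "A*B = 1\<^sub>m m" "B*A = 1\<^sub>m m" unfolding Units_def ring_mat_def by auto
  then have ex: "\<exists>B. B \<in> carrier_mat (dim_row A) (dim_row A) \<and> A * B = 1\<^sub>m (dim_row A) \<and> B * A = 1\<^sub>m (dim_row A)"
    using A by auto
  from someI_ex[OF ex] show ?thesis unfolding mat_inv_def using A by auto
qed

lemma eig_char:
  fixes A Ai B :: "real mat"
  assumes A: "A \<in> carrier_mat m m" and Ai: "Ai \<in> carrier_mat m m" and B: "B \<in> carrier_mat m m"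
    and i1: "Ai * A = 1\<^sub>m m" and i2: "A * Ai = 1\<^sub>m m"
  shows "eigenvalue (map_mat complex_of_real (Ai * B)) mu \<longleftrightarrow>
    (\<exists>v \<in> carrier_vec m. v \<noteq> 0\<^sub>v m \<and> map_mat complex_of_real B *\<^sub>v v = mu \<cdot>\<^sub>v (map_mat complex_of_real A *\<^sub>v v))"
proof -
  let ?A = "map_mat complex_of_real A" and ?Ai = "map_mat complex_of_real Ai" and ?B = "map_mat complex_of_real B"
  have e: "map_mat complex_of_real (Ai * B) = ?Ai * ?B" by (rule of_real_hom.mat_hom_mult[OF Ai B])
  have j1: "?Ai * ?A = 1\<^sub>m m" using of_real_hom.mat_hom_mult[OF Ai A] i1 of_real_hom.mat_hom_one by metis
  have j2: "?A * ?Ai = 1\<^sub>m m" using of_real_hom.mat_hom_mult[OF A Ai] i2 of_real_hom.mat_hom_one by metis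
  have cA: "?A \<in> carrier_mat m m" "?Ai \<in> carrier_mat m m" "?B \<in> carrier_mat m m" using A Ai B by auto
  have "(?Ai * ?B) *\<^sub>v v = mu \<cdot>\<^sub>v v \<longleftrightarrow> ?B *\<^sub>v v = mu \<cdot>\<^sub>v (?A *\<^sub>v v)" if v: "v \<in> carrier_vec m" for v
  proof
    assume h: "(?Ai * ?B) *\<^sub>v v = mu \<cdot>\<^sub>v v"
    have "?B *\<^sub>v v = (?A * ?Ai * ?B) *\<^sub>v v" using j2 cA v by simp
    also have "\<dots> = ?A *\<^sub>v ((?Ai * ?B) *\<^sub>v v)" using cA v
      by (metis assoc_mult_mat assoc_mult_mat_vec mult_carrier_mat)
    also have "\<dots> = mu \<cdot>\<^sub>v (?A *\<^sub>v v)" using h cA v by (simp add: mult_mat_vec)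
    finally show "?B *\<^sub>v v = mu \<cdot>\<^sub>v (?A *\<^sub>v v)" .
  next
    assume h: "?B *\<^sub>v v = mu \<cdot>\<^sub>v (?A *\<^sub>v v)"
    have "(?Ai * ?B) *\<^sub>v v = ?Ai *\<^sub>v (?B *\<^sub>v v)" using cA v by (simp add: assoc_mult_mat_vec)
    also have "\<dots> = mu \<cdot>\<^sub>v ((?Ai * ?A) *\<^sub>v v)" using h cA v by (simp add: mult_mat_vec assoc_mult_mat_vec)
    also have "\<dots> = mu \<cdot>\<^sub>v v" using j1 v by simp
    finally show "(?Ai * ?B) *\<^sub>v v = mu \<cdot>\<^sub>v v" .
  qed
  moreover have "dim_row (?Ai * ?B) = m" using cA by simp
  ultimately show ?thesis unfolding eigenvalue_def eigenvector_def e by auto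
qed


definition Bq :: "nat \<Rightarrow> (nat\<Rightarrow>nat\<Rightarrow>complex) \<Rightarrow> (nat\<Rightarrow>nat\<Rightarrow>complex) \<Rightarrow> nat \<Rightarrow> nat \<Rightarrow> nat \<Rightarrow> complex" where
  "Bq n u l q a b = (if q < n - 1 then (if b = n - 1 - q \<and> a < b then u a b else 0) else l a b)"

definition EqS :: "nat \<Rightarrow> (nat\<Rightarrow>nat\<Rightarrow>complex) \<Rightarrow> (nat\<Rightarrow>nat\<Rightarrow>complex) \<Rightarrow> complex \<Rightarrow> (nat \<Rightarrow> nat \<Rightarrow> complex) \<Rightarrow> bool" where
  "EqS n u l mu y \<longleftrightarrow> (\<forall>p<n. \<forall>a<n. (\<Sum>q<n. (if p \<le> q then 1 else mu) * (\<Sum>b<n. Bq n u l q a b * y q b)) = mu * y p a)"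

lemma V_lemma:
  assumes uz: "\<And>a b. a < n \<Longrightarrow> b < n \<Longrightarrow> b \<le> a \<Longrightarrow> u a b = 0"
    and q: "q < n - 1" and a: "a < n"
  shows "(\<Sum>b<n. Bq n u l q a b * w b) = u a (n - 1 - q) * w (n - 1 - q)"
proof -
  have "(\<Sum>b<n. Bq n u l q a b * w b) = (\<Sum>b<n. if b = n - 1 - q then u a (n - 1 - q) * w (n - 1 - q) else 0)"
    by (rule sum.cong, insert q a, auto simp: Bq_def uz)
  also have "\<dots> = u a (n - 1 - q) * w (n - 1 - q)" using q by (simp add: sum.delta')
  finally show ?thesis .
qed

lemma reidx:
  fixes F :: "nat \<Rightarrow> complex"
  assumes "n \<ge> 1" "F 0 = 0"
  shows "(\<Sum>q<n-1. F (n - 1 - q)) = (\<Sum>k<n. F k)"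
proof -
  have "(\<Sum>q<n-1. F (n - 1 - q)) = (\<Sum>q<n-1. (\<lambda>k. F (Suc k)) (n - 1 - Suc q))"
    by (intro sum.cong refl arg_cong[where f=F]) auto
  also have "\<dots> = (\<Sum>k<n-1. F (Suc k))" by (rule sum.nat_diff_reindex)
  also have "\<dots> = (\<Sum>k<Suc (n-1). F k)" using assms(2) by (subst sum.lessThan_Suc_shift) simp
  finally show ?thesis using assms(1) by simp
qed

lemma C1:
  fixes u l :: "nat \<Rightarrow> nat \<Rightarrow> complex" and t :: "nat \<Rightarrow> complex"
  assumes uz: "\<And>a b. a < n \<Longrightarrow> b < n \<Longrightarrow> b \<le> a \<Longrightarrow> u a b = 0"
    and n1: "n \<ge> 1"
    and teq: "\<forall>a<n. (\<Sum>b<n. l a b * t b) = mu * (t a - (\<Sum>b<n. u a b * t b))"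
  shows "EqS n u l mu (\<lambda>p a. mu * t a - (mu - 1) * (\<Sum>k<n-p. u a k * t k))"
  unfolding EqS_def
proof (intro allI impI)
  fix p a assume p: "p < n" and a: "a < n"
  define y where "y = (\<lambda>p a. mu * t a - (mu - 1) * (\<Sum>k<n-p. u a k * t k))"
  define G where "G = (\<lambda>k. u a k * t k)"
  define F where "F = (\<lambda>k. (if k < n - p then 1 else mu) * u a k * (mu * t k))"
  have ym: "y q (n - 1 - q) = mu * t (n - 1 - q)" if "q < n - 1" for q
  proof -
    have "(\<Sum>k<n-q. u (n - 1 - q) k * t k) = 0"
      by (rule sum.neutral) (use that in \<open>auto intro!: uz\<close>)
    then show ?thesis unfolding y_def by simp
  qed
  have yl: "y (n - Suc 0) b = mu * t b" if "b < n" for b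
  proof -
    have "n - (n - 1) = 1" using n1 by simp
    then show ?thesis unfolding y_def using uz[of b 0] that by simp
  qed
  have "(\<Sum>q<n-1. (if p \<le> q then 1 else mu) * (\<Sum>b<n. Bq n u l q a b * y q b))
      = (\<Sum>q<n-1. F (n - 1 - q))"
  proof (rule sum.cong)
    fix q assume q: "q \<in> {..<n-1}"
    have "(p \<le> q) = (n - 1 - q < n - p)" using q p by auto
    then show "(if p \<le> q then 1 else mu) * (\<Sum>b<n. Bq n u l q a b * y q b) = F (n - 1 - q)"
      using q V_lemma[where q=q and l=l and w="y q", OF uz _ a] ym[of q] unfolding F_def by auto
  qed simp
  also have "\<dots> = (\<Sum>k<n. F k)" using reidx[OF n1, of F] uz[OF a, of 0] n1 unfolding F_def by simp
  finally have s1: "(\<Sum>q<n-1. (if p \<le> q then 1 else mu) * (\<Sum>b<n. Bq n u l q a b * y q b)) = (\<Sum>k<n. F k)" .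
  have s2: "(\<Sum>b<n. Bq n u l (n-1) a b * y (n-1) b) = mu * (\<Sum>b<n. l a b * t b)"
    unfolding sum_distrib_left by (rule sum.cong) (auto simp: Bq_def yl)
  have split: "(\<Sum>q<n. (if p \<le> q then 1 else mu) * (\<Sum>b<n. Bq n u l q a b * y q b))
     = (\<Sum>q<n-1. (if p \<le> q then 1 else mu) * (\<Sum>b<n. Bq n u l q a b * y q b))
       + (\<Sum>b<n. Bq n u l (n-1) a b * y (n-1) b)"
  proof -
    obtain m where m: "n = Suc m" using n1 by (cases n) auto
    show ?thesis using p unfolding m by (simp add: sum.lessThan_Suc)
  qed
  have sub: "(\<Sum>k<n-p. G k) = (\<Sum>k<n. if k < n - p then G k else 0)"
    by (rule sum.mono_neutral_cong_left) auto
  have z: "(\<Sum>k<n. F k - mu * mu * G k + mu * (mu - 1) * (if k < n - p then G k else 0)) = 0"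
    by (rule sum.neutral) (auto simp: F_def G_def algebra_simps)
  have "(\<Sum>k<n. F k) + mu * (mu * (t a - (\<Sum>k<n. G k))) = mu * (mu * t a - (mu - 1) * (\<Sum>k<n-p. G k))"
    using z unfolding sub by (simp add: sum.distrib sum_subtractf sum_distrib_left algebra_simps)
  then show "(\<Sum>q<n. (if p \<le> q then 1 else mu) * (\<Sum>b<n. Bq n u l q a b * y q b)) = mu * y p a"
    unfolding split s1 s2 using teq a unfolding y_def G_def by simp
qed

lemma C2:
  fixes u l :: "nat \<Rightarrow> nat \<Rightarrow> complex" and y :: "nat \<Rightarrow> nat \<Rightarrow> complex"
  assumes uz: "\<And>a b. a < n \<Longrightarrow> b < n \<Longrightarrow> b \<le> a \<Longrightarrow> u a b = 0"
    and n1: "n \<ge> 1" and mu: "mu \<noteq> 0"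
    and E: "EqS n u l mu y"
    and yz: "\<exists>q<n. \<exists>b<n. y q b \<noteq> 0"
  shows "(\<exists>a<n. y (n - 1) a \<noteq> 0) \<and>
     (\<forall>a<n. (\<Sum>b<n. l a b * y (n - 1) b) = mu * (y (n - 1) a - (\<Sum>b<n. u a b * y (n - 1) b)))"
proof -
  define t where "t = y (n - 1)"
  define c where "c = (mu - 1) / mu"
  define V where "V = (\<lambda>q a. (\<Sum>b<n. Bq n u l q a b * y q b))"
  have Ep: "(\<Sum>q<n. (if p \<le> q then 1 else mu) * V q a) = mu * y p a" if "p < n" "a < n" for p a
    using E that unfolding EqS_def V_def by blast
  have step: "y p a = y (Suc p) a - c * u a (n - 1 - p) * y p (n - 1 - p)" if p: "Suc p < n" and a: "a < n" for p a
  proof -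
    have "(\<Sum>q<n. (if Suc p \<le> q then 1 else mu) * V q a) - (\<Sum>q<n. (if p \<le> q then 1 else mu) * V q a)
        = (\<Sum>q<n. if q = p then (mu - 1) * V q a else 0)"
      unfolding sum_subtractf[symmetric] by (rule sum.cong) (auto simp: algebra_simps)
    also have "\<dots> = (mu - 1) * V p a" using p by (simp add: sum.delta')
    also have "V p a = u a (n - 1 - p) * y p (n - 1 - p)"
      unfolding V_def by (rule V_lemma[OF uz _ a]) (use p in auto)
    finally have "mu * y (Suc p) a - mu * y p a = (mu - 1) * (u a (n - 1 - p) * y p (n - 1 - p))"
      using Ep[OF p a] Ep[of p a] p a by simp
    then show ?thesis unfolding c_def using mu by (simp add: field_simps)
  qed
  have claim: "\<forall>a<n. y (n - 1 - j) a = t a - c * (\<Sum>k<Suc j. u a k * t k)" if "j < n" for j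
    using that
  proof (induction j)
    case 0
    then show ?case unfolding t_def using uz[of _ 0] by auto
  next
    case (Suc j)
    define p where "p = n - 1 - Suc j"
    have pj: "Suc p = n - 1 - j" "n - 1 - p = Suc j" "Suc p < n" using Suc.prems unfolding p_def by auto
    have IH: "\<forall>a<n. y (Suc p) a = t a - c * (\<Sum>k<Suc j. u a k * t k)" using Suc pj by simp
    have m: "y p (Suc j) = t (Suc j)"
    proof -
      have "y p (Suc j) = y (Suc p) (Suc j)" using step[OF pj(3), of "Suc j"] Suc.prems uz[of "Suc j" "Suc j"] pj by simp
      also have "\<dots> = t (Suc j) - c * (\<Sum>k<Suc j. u (Suc j) k * t k)" using IH Suc.prems by simp
      also have "(\<Sum>k<Suc j. u (Suc j) k * t k) = 0" by (rule sum.neutral) (use Suc.prems in \<open>auto intro!: uz\<close>)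
      finally show ?thesis by simp
    qed
    show ?case
    proof (intro allI impI)
      fix a assume a: "a < n"
      have "y p a = y (Suc p) a - c * u a (Suc j) * t (Suc j)" using step[OF pj(3) a] pj m by simp
      also have "y (Suc p) a = t a - c * (\<Sum>k<Suc j. u a k * t k)" using IH a by blast
      finally have "y p a = t a - c * (\<Sum>k<Suc j. u a k * t k) - c * u a (Suc j) * t (Suc j)" .
      then show "y (n - 1 - Suc j) a = t a - c * (\<Sum>k<Suc (Suc j). u a k * t k)"
        unfolding p_def[symmetric] by (simp add: algebra_simps)
    qed
  qed
  have tnz: "\<exists>a<n. t a \<noteq> 0"
  proof (rule ccontr)
    assume "\<not> ?thesis"
    then have t0: "\<And>a. a < n \<Longrightarrow> t a = 0" by auto
    from yz obtain q b where qb: "q < n" "b < n" "y q b \<noteq> 0" by auto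
    have e: "n - 1 - (n - 1 - q) = q" using qb by auto
    have j: "n - 1 - q < n" using n1 by simp
    have "y q b = t b - c * (\<Sum>k<Suc (n - 1 - q). u b k * t k)" using claim[OF j] qb unfolding e by blast
    also have "\<dots> = 0" using t0 qb by (auto intro!: sum.neutral)
    finally show False using qb by simp
  qed
  have ym: "y q (n - 1 - q) = t (n - 1 - q)" if q: "q < n" for q
  proof -
    have e: "n - 1 - (n - 1 - q) = q" using q by auto
    have j: "n - 1 - q < n" using n1 by simp
    have "y q (n - 1 - q) = t (n - 1 - q) - c * (\<Sum>k<Suc (n - 1 - q). u (n - 1 - q) k * t k)"
      using claim[OF j] j unfolding e by blast
    also have "(\<Sum>k<Suc (n - 1 - q). u (n - 1 - q) k * t k) = 0" by (rule sum.neutral) (use q in \<open>auto intro!: uz\<close>)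
    finally show ?thesis by simp
  qed
  have final: "(\<Sum>b<n. l a b * t b) = mu * (t a - (\<Sum>b<n. u a b * t b))" if a: "a < n" for a
  proof -
    obtain m where m: "n = Suc m" using n1 by (cases n) auto
    have "(\<Sum>q<n-1. V q a) = (\<Sum>q<n-1. (\<lambda>k. u a k * t k) (n - 1 - q))"
    proof (rule sum.cong)
      fix q assume q: "q \<in> {..<n-1}"
      show "V q a = u a (n - 1 - q) * t (n - 1 - q)"
        unfolding V_def using V_lemma[where q=q and l=l and w="y q", OF uz _ a] q ym[of q] by auto
    qed simp
    also have "\<dots> = (\<Sum>k<n. u a k * t k)" by (rule reidx[OF n1]) (use uz[OF a, of 0] n1 in simp)
    finally have s1: "(\<Sum>q<n-1. V q a) = (\<Sum>k<n. u a k * t k)" .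
    have s2: "V (n - 1) a = (\<Sum>b<n. l a b * t b)" unfolding V_def t_def by (simp add: Bq_def)
    have "(\<Sum>q<n. V q a) = (\<Sum>q<n-1. V q a) + V (n - 1) a" unfolding m by (simp add: sum.lessThan_Suc)
    moreover have "(\<Sum>q<n. V q a) = mu * y 0 a" using Ep[of 0 a] a n1 by simp
    moreover have "y 0 a = t a - c * (\<Sum>k<n. u a k * t k)" using claim[of "n - 1"] a n1 by simp
    ultimately have "(\<Sum>k<n. u a k * t k) + (\<Sum>b<n. l a b * t b) = mu * (t a - c * (\<Sum>k<n. u a k * t k))"
      using s1 s2 by simp
    moreover have cc: "mu * (t a - c * S) = mu * t a - (mu - 1) * S" for S unfolding c_def using mu by (simp add: field_simps)
    ultimately have "(\<Sum>k<n. u a k * t k) + (\<Sum>b<n. l a b * t b) = mu * t a - (mu - 1) * (\<Sum>k<n. u a k * t k)"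
      by simp
    then show ?thesis by (simp add: algebra_simps)
  qed
  show ?thesis using tnz final unfolding t_def by blast
qed

lemma idx_lt: "p < n \<Longrightarrow> a < (n::nat) \<Longrightarrow> p * n + a < n * n"
proof -
  assume p: "p < n" and a: "a < n"
  have "Suc p * n \<le> n * n" using mult_le_mono1[of "Suc p" n n] p by simp
  then show ?thesis using a by simp
qed

lemma sum_blocks: fixes n :: nat and f :: "nat \<Rightarrow> 'a::comm_monoid_add" shows "(\<Sum>j<n*n. f j) = (\<Sum>q<n. \<Sum>b<n. f (q * n + b))"
proof -
  have "(\<Sum>j<n*n. f j) = (\<Sum>q<n. sum f {q * n..<q * n + n})" using sum.nat_group[where g=f and k=n and n=n] by simp
  also have "\<dots> = (\<Sum>q<n. \<Sum>b<n. f (q * n + b))"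
  proof (rule sum.cong[OF refl])
    fix q
    show "sum f {q * n..<q * n + n} = (\<Sum>b<n. f (q * n + b))"
      by (rule sum.reindex_bij_witness[where i="\<lambda>b. q * n + b" and j="\<lambda>j. j - q * n"]) auto
  qed
  finally show ?thesis .
qed

lemma mv_entry:
  fixes M :: "real mat" and v :: "complex vec"
  assumes M: "M \<in> carrier_mat (n*n) (n*n)" and v: "v \<in> carrier_vec (n*n)" and i: "i < n * n"
  shows "(map_mat complex_of_real M *\<^sub>v v) $ i = (\<Sum>q<n. \<Sum>b<n. complex_of_real (M $$ (i, q*n+b)) * v $ (q*n+b))"
proof -
  have "(map_mat complex_of_real M *\<^sub>v v) $ i = (\<Sum>j<n*n. complex_of_real (M $$ (i, j)) * v $ j)"
    using M v i by (auto simp: scalar_prod_def atLeast0LessThan intro!: sum.cong)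
  also have "\<dots> = (\<Sum>q<n. \<Sum>b<n. complex_of_real (M $$ (i, q*n+b)) * v $ (q*n+b))" by (rule sum_blocks)
  finally show ?thesis .
qed

lemma mv_entry1:
  fixes M :: "real mat" and v :: "complex vec"
  assumes M: "M \<in> carrier_mat n n" and v: "v \<in> carrier_vec n" and i: "i < n"
  shows "(map_mat complex_of_real M *\<^sub>v v) $ i = (\<Sum>j<n. complex_of_real (M $$ (i, j)) * v $ j)"
  using M v i by (auto simp: scalar_prod_def atLeast0LessThan intro!: sum.cong)

lemma EqS_cong:
  assumes "EqS n u l mu y" "\<And>q b. q < n \<Longrightarrow> b < n \<Longrightarrow> y q b = y' q b"
  shows "EqS n u l mu y'"
proof -
  have "(\<Sum>q<n. (if p \<le> q then 1 else mu) * (\<Sum>b<n. Bq n u l q a b * y q b))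
      = (\<Sum>q<n. (if p \<le> q then 1 else mu) * (\<Sum>b<n. Bq n u l q a b * y' q b))" for p a
    using assms(2) by (intro sum.cong refl arg_cong2[where f="(*)"]) auto
  then show ?thesis using assms unfolding EqS_def by auto
qed



theorem theorem6p1:
  fixes n :: nat and L U :: "real mat"
  assumes "strictly_lower n L"
    and "strictly_upper n U"
    and "L \<noteq> 0\<^sub>m n n"
    and "\<forall>j\<in>{2..n}. col_part n U j \<noteq> 0\<^sub>m n n"
  shows "\<forall>mu::complex. mu \<noteq> 0 \<longrightarrow>
    (eigenvalue (map_mat complex_of_real (iter_mat n (futc_splitting n L U))) mu
     \<longleftrightarrow> eigenvalue (map_mat complex_of_real (bGS n L U)) mu)"
proof (intro allI impI)
  fix mu :: complex assume mu: "mu \<noteq> 0"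
  have L: "L \<in> carrier_mat n n" and lz: "\<And>i j. i < n \<Longrightarrow> j < n \<Longrightarrow> i \<le> j \<Longrightarrow> L $$ (i,j) = 0"
    using assms(1) unfolding strictly_lower_def by auto
  have U: "U \<in> carrier_mat n n" and uz0: "\<And>i j. i < n \<Longrightarrow> j < n \<Longrightarrow> j \<le> i \<Longrightarrow> U $$ (i,j) = 0"
    using assms(2) unfolding strictly_upper_def by auto
  have n1: "n \<ge> 1"
  proof (rule ccontr)
    assume "\<not> n \<ge> 1"
    then have "n = 0" by simp
    then have "L = 0\<^sub>m n n" using L by (intro eq_matI) auto
    then show False using assms(3) by simp
  qed
  define Bs where "Bs = futc_splitting n L U"
  have lenBs: "length Bs = n" unfolding Bs_def futc_splitting_def using n1 by simp
  have Bs_ent: "Bs ! q $$ (a,b) = (if q < n - 1 then (if b = n - 1 - q \<and> a < b then U $$ (a,b) else 0) else L $$ (a,b))"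
    if q: "q < n" and a: "a < n" and b: "b < n" for q a b
  proof (cases "q < n - 1")
    case True
    then have "Bs ! q = col_part n U (n - q)" unfolding Bs_def futc_splitting_def by (simp add: nth_append)
    then show ?thesis using True a b unfolding col_part_def by auto
  next
    case False
    then have "q = n - 1" using q by simp
    then have "Bs ! q = L" unfolding Bs_def futc_splitting_def using n1 by (simp add: nth_append)
    then show ?thesis using False by simp
  qed
  define N where "N = n * n"
  define A where "A = 1\<^sub>m N - calL n Bs"
  have A: "A \<in> carrier_mat N N" unfolding A_def calL_def block_mat_def lenBs N_def by auto
  have CU: "calU n Bs \<in> carrier_mat N N" unfolding calU_def block_mat_def lenBs N_def by auto
  have calL_ent: "calL n Bs $$ (i,j) = (if j div n < i div n then Bs ! (j div n) $$ (i mod n, j mod n) else 0)"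
    if "i < N" "j < N" for i j
    using that n1 unfolding calL_def block_mat_def lenBs N_def by auto
  have calU_ent: "calU n Bs $$ (i,j) = (if i div n \<le> j div n then Bs ! (j div n) $$ (i mod n, j mod n) else 0)"
    if "i < N" "j < N" for i j
    using that n1 unfolding calU_def block_mat_def lenBs N_def by auto
  have A_ent: "A $$ (i,j) = (if i = j then 1 else 0) - calL n Bs $$ (i,j)" if "i < N" "j < N" for i j
    using that A unfolding A_def by (auto simp: calL_def block_mat_def lenBs N_def)
  have A_ent2: "A $$ (p*n+a, q*n+b) = (if q = p \<and> b = a then 1 else 0) - (if q < p then Bs ! q $$ (a,b) else 0)"
    if pa: "p < n" "a < n" "q < n" "b < n" for p a q b
  proof -
    have d: "(p*n+a) div n = p" "(p*n+a) mod n = a" "(q*n+b) div n = q" "(q*n+b) mod n = b" using pa by auto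
    have "(p*n+a = q*n+b) = (q = p \<and> b = a)" by (metis d)
    then show ?thesis using A_ent[OF idx_lt[OF pa(1,2), folded N_def] idx_lt[OF pa(3,4), folded N_def]] 
        calL_ent[OF idx_lt[OF pa(1,2), folded N_def] idx_lt[OF pa(3,4), folded N_def]] d by auto
  qed
  have detA: "det A = 1"
  proof -
    have "det A = prod_list (diag_mat A)"
    proof (rule det_lower_triangular[OF _ A])
      fix i j assume ij: "i < j" "j < N"
      then have "\<not> j div n < i div n" by (simp add: div_le_mono leD less_imp_le)
      then show "A $$ (i,j) = 0" using ij A_ent calL_ent by auto
    qed
    also have "\<dots> = (\<Prod>i = 0..<N. A $$ (i,i))" using A by (simp add: prod_list_diag_prod)
    also have "\<dots> = 1" by (rule prod.neutral) (auto simp: A_ent calL_ent)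
    finally show ?thesis .
  qed
  define A' where "A' = 1\<^sub>m n - U"
  have A': "A' \<in> carrier_mat n n" unfolding A'_def using U by auto
  have detA': "det A' = 1"
  proof -
    have "det A' = prod_list (diag_mat A')"
    proof (rule det_upper_triangular[OF _ A'])
      show "upper_triangular A'" unfolding upper_triangular_def A'_def using U uz0 by auto
    qed
    also have "\<dots> = (\<Prod>i = 0..<n. A' $$ (i,i))" using A' by (simp add: prod_list_diag_prod)
    also have "\<dots> = 1" by (rule prod.neutral) (use U uz0 in \<open>auto simp: A'_def\<close>)
    finally show ?thesis .
  qed
  obtain Ai where Ai: "Ai = mat_inv A" "Ai \<in> carrier_mat N N" "A * Ai = 1\<^sub>m N" "Ai * A = 1\<^sub>m N"
    using mat_inv_props[OF A] detA by auto
  obtain Ai' where Ai': "Ai' = mat_inv A'" "Ai' \<in> carrier_mat n n" "A' * Ai' = 1\<^sub>m n" "Ai' * A' = 1\<^sub>m n"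
    using mat_inv_props[OF A'] detA' by auto
  have iter: "iter_mat n (futc_splitting n L U) = Ai * calU n Bs"
    unfolding iter_mat_def Bs_def[symmetric] lenBs Ai(1) A_def N_def ..
  have bgs: "bGS n L U = Ai' * L" unfolding bGS_def Ai'(1) A'_def ..
  have E1: "eigenvalue (map_mat complex_of_real (iter_mat n (futc_splitting n L U))) mu \<longleftrightarrow>
    (\<exists>v \<in> carrier_vec N. v \<noteq> 0\<^sub>v N \<and> map_mat complex_of_real (calU n Bs) *\<^sub>v v = mu \<cdot>\<^sub>v (map_mat complex_of_real A *\<^sub>v v))"
    unfolding iter by (rule eig_char[OF A Ai(2) CU Ai(4) Ai(3)])
  have E2: "eigenvalue (map_mat complex_of_real (bGS n L U)) mu \<longleftrightarrow>
    (\<exists>v \<in> carrier_vec n. v \<noteq> 0\<^sub>v n \<and> map_mat complex_of_real L *\<^sub>v v = mu \<cdot>\<^sub>v (map_mat complex_of_real A' *\<^sub>v v))"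
    unfolding bgs by (rule eig_char[OF A' Ai'(2) L Ai'(4) Ai'(3)])
  define u where "u = (\<lambda>a b. complex_of_real (U $$ (a,b)))"
  define l where "l = (\<lambda>a b. complex_of_real (L $$ (a,b)))"
  have uz: "\<And>a b. a < n \<Longrightarrow> b < n \<Longrightarrow> b \<le> a \<Longrightarrow> u a b = 0" unfolding u_def using uz0 by simp
  have Bq_ent: "complex_of_real (Bs ! q $$ (a,b)) = Bq n u l q a b" if "q < n" "a < n" "b < n" for q a b
    using Bs_ent[OF that] unfolding Bq_def u_def l_def by simp
  have K1: "(map_mat complex_of_real (calU n Bs) *\<^sub>v v = mu \<cdot>\<^sub>v (map_mat complex_of_real A *\<^sub>v v))
      \<longleftrightarrow> EqS n u l mu (\<lambda>q b. v $ (q * n + b))" if v: "v \<in> carrier_vec N" for v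
  proof -
    define y where "y = (\<lambda>q b. v $ (q * n + b))"
    define V where "V = (\<lambda>q a. (\<Sum>b<n. Bq n u l q a b * y q b))"
    have vN: "v \<in> carrier_vec (n*n)" using v unfolding N_def .
    have ent: "(map_mat complex_of_real (calU n Bs) *\<^sub>v v) $ (p*n+a) = (mu \<cdot>\<^sub>v (map_mat complex_of_real A *\<^sub>v v)) $ (p*n+a)
       \<longleftrightarrow> (\<Sum>q<n. (if p \<le> q then 1 else mu) * V q a) = mu * y p a" if p: "p < n" and a: "a < n" for p a
    proof -
      have i: "p * n + a < n * n" using idx_lt[OF p a] .
      have "(map_mat complex_of_real (calU n Bs) *\<^sub>v v) $ (p*n+a)
          = (\<Sum>q<n. \<Sum>b<n. complex_of_real (calU n Bs $$ (p*n+a, q*n+b)) * v $ (q*n+b))"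
        by (rule mv_entry[OF _ vN i]) (use CU in \<open>simp add: N_def\<close>)
      also have "\<dots> = (\<Sum>q<n. (if p \<le> q then 1 else 0) * V q a)"
        unfolding V_def y_def sum_distrib_left
        by (intro sum.cong refl) (use p a Bq_ent idx_lt in \<open>auto simp: calU_ent N_def\<close>)
      finally have l1: "(map_mat complex_of_real (calU n Bs) *\<^sub>v v) $ (p*n+a) = (\<Sum>q<n. (if p \<le> q then 1 else 0) * V q a)" .
      have dd: "(\<Sum>q<n. \<Sum>b<n. if q = p \<and> b = a then y q b else 0) = y p a"
      proof -
        have "(\<Sum>q<n. \<Sum>b<n. if q = p \<and> b = a then y q b else 0) = (\<Sum>q<n. if q = p then y p a else 0)"
          by (rule sum.cong) (use a in \<open>auto simp: sum.delta'\<close>)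
        also have "\<dots> = y p a" using p by simp
        finally show ?thesis .
      qed
      have "(map_mat complex_of_real A *\<^sub>v v) $ (p*n+a)
          = (\<Sum>q<n. \<Sum>b<n. complex_of_real (A $$ (p*n+a, q*n+b)) * v $ (q*n+b))"
        by (rule mv_entry[OF _ vN i]) (use A in \<open>simp add: N_def\<close>)
      also have "\<dots> = (\<Sum>q<n. \<Sum>b<n. (if q = p \<and> b = a then y q b else 0) - (if q < p then 1 else 0) * (Bq n u l q a b * y q b))"
        unfolding y_def
        by (intro sum.cong refl) (use p a in \<open>auto simp: A_ent2 Bq_ent left_diff_distrib\<close>)
      also have "\<dots> = y p a - (\<Sum>q<n. (if q < p then 1 else 0) * V q a)"
        unfolding V_def sum_subtractf sum_distrib_left dd by simp
      finally have l2: "(map_mat complex_of_real A *\<^sub>v v) $ (p*n+a) = y p a - (\<Sum>q<n. (if q < p then 1 else 0) * V q a)" .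
      have sp: "(\<Sum>q<n. (if p \<le> q then 1 else mu) * V q a) = (\<Sum>q<n. (if p \<le> q then 1 else 0) * V q a) + mu * (\<Sum>q<n. (if q < p then 1 else 0) * V q a)"
        unfolding sum_distrib_left sum.distrib[symmetric] by (rule sum.cong) auto
      have sm: "(mu \<cdot>\<^sub>v (map_mat complex_of_real A *\<^sub>v v)) $ (p*n+a) = mu * (map_mat complex_of_real A *\<^sub>v v) $ (p*n+a)"
        by (rule index_smult_vec(1)) (use i A in \<open>simp add: N_def\<close>)
      show ?thesis unfolding l1 sp sm l2 by (auto simp: algebra_simps)
    qed
    have "(map_mat complex_of_real (calU n Bs) *\<^sub>v v = mu \<cdot>\<^sub>v (map_mat complex_of_real A *\<^sub>v v))
       \<longleftrightarrow> (\<forall>i<N. (map_mat complex_of_real (calU n Bs) *\<^sub>v v) $ i = (mu \<cdot>\<^sub>v (map_mat complex_of_real A *\<^sub>v v)) $ i)"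
      using CU A by (auto simp: vec_eq_iff)
    also have "\<dots> \<longleftrightarrow> (\<forall>p<n. \<forall>a<n. (map_mat complex_of_real (calU n Bs) *\<^sub>v v) $ (p*n+a) = (mu \<cdot>\<^sub>v (map_mat complex_of_real A *\<^sub>v v)) $ (p*n+a))"
    proof
      assume h: "\<forall>i<N. (map_mat complex_of_real (calU n Bs) *\<^sub>v v) $ i = (mu \<cdot>\<^sub>v (map_mat complex_of_real A *\<^sub>v v)) $ i"
      show "\<forall>p<n. \<forall>a<n. (map_mat complex_of_real (calU n Bs) *\<^sub>v v) $ (p*n+a) = (mu \<cdot>\<^sub>v (map_mat complex_of_real A *\<^sub>v v)) $ (p*n+a)"
        using h idx_lt unfolding N_def by blast
    next
      assume h: "\<forall>p<n. \<forall>a<n. (map_mat complex_of_real (calU n Bs) *\<^sub>v v) $ (p*n+a) = (mu \<cdot>\<^sub>v (map_mat complex_of_real A *\<^sub>v v)) $ (p*n+a)"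
      show "\<forall>i<N. (map_mat complex_of_real (calU n Bs) *\<^sub>v v) $ i = (mu \<cdot>\<^sub>v (map_mat complex_of_real A *\<^sub>v v)) $ i"
      proof (intro allI impI)
        fix i assume i: "i < N"
        have "i div n < n" using i unfolding N_def by (simp add: less_mult_imp_div_less)
        moreover have "i mod n < n" using n1 by simp
        ultimately show "(map_mat complex_of_real (calU n Bs) *\<^sub>v v) $ i = (mu \<cdot>\<^sub>v (map_mat complex_of_real A *\<^sub>v v)) $ i"
          using h by (metis div_mult_mod_eq)
      qed
    qed
    also have "\<dots> \<longleftrightarrow> EqS n u l mu y" using ent unfolding EqS_def V_def by simp
    finally show ?thesis unfolding y_def .
  qed
  have K2: "(map_mat complex_of_real L *\<^sub>v w = mu \<cdot>\<^sub>v (map_mat complex_of_real A' *\<^sub>v w))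
      \<longleftrightarrow> (\<forall>a<n. (\<Sum>b<n. l a b * w $ b) = mu * (w $ a - (\<Sum>b<n. u a b * w $ b)))" if w: "w \<in> carrier_vec n" for w
  proof -
    have e1: "(map_mat complex_of_real L *\<^sub>v w) $ a = (\<Sum>b<n. l a b * w $ b)" if a: "a < n" for a
      unfolding l_def by (rule mv_entry1[OF L w a])
    have e2: "(map_mat complex_of_real A' *\<^sub>v w) $ a = w $ a - (\<Sum>b<n. u a b * w $ b)" if a: "a < n" for a
    proof -
      have "(map_mat complex_of_real A' *\<^sub>v w) $ a = (\<Sum>b<n. (if a = b then w $ b else 0) - u a b * w $ b)"
        unfolding mv_entry1[OF A' w a] by (rule sum.cong) (use a U in \<open>auto simp: A'_def u_def algebra_simps\<close>)
      also have "\<dots> = w $ a - (\<Sum>b<n. u a b * w $ b)" unfolding sum_subtractf using a by simp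
      finally show ?thesis .
    qed
    have e3: "(mu \<cdot>\<^sub>v (map_mat complex_of_real A' *\<^sub>v w)) $ a = mu * (w $ a - (\<Sum>b<n. u a b * w $ b))"
      if a: "a < n" for a
      by (subst index_smult_vec(1)) (use a A' e2[OF a] in auto)
    have "(map_mat complex_of_real L *\<^sub>v w = mu \<cdot>\<^sub>v (map_mat complex_of_real A' *\<^sub>v w))
       \<longleftrightarrow> (\<forall>a<n. (map_mat complex_of_real L *\<^sub>v w) $ a = (mu \<cdot>\<^sub>v (map_mat complex_of_real A' *\<^sub>v w)) $ a)"
      using L A' by (auto intro!: eq_vecI simp del: index_mult_mat_vec index_smult_vec(1))
    also have "\<dots> \<longleftrightarrow> (\<forall>a<n. (\<Sum>b<n. l a b * w $ b) = mu * (w $ a - (\<Sum>b<n. u a b * w $ b)))"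
      by (auto simp del: index_mult_mat_vec index_smult_vec(1) simp: e1 e3)
    finally show ?thesis .
  qed
  show "eigenvalue (map_mat complex_of_real (iter_mat n (futc_splitting n L U))) mu
     \<longleftrightarrow> eigenvalue (map_mat complex_of_real (bGS n L U)) mu"
  proof
    assume "eigenvalue (map_mat complex_of_real (iter_mat n (futc_splitting n L U))) mu"
    then obtain v where v: "v \<in> carrier_vec N" "v \<noteq> 0\<^sub>v N"
      "map_mat complex_of_real (calU n Bs) *\<^sub>v v = mu \<cdot>\<^sub>v (map_mat complex_of_real A *\<^sub>v v)" using E1 by auto
    define y where "y = (\<lambda>q b. v $ (q * n + b))"
    have Ey: "EqS n u l mu y" using K1[OF v(1)] v(3) unfolding y_def by simp
    have yz: "\<exists>q<n. \<exists>b<n. y q b \<noteq> 0"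
    proof -
      have "\<exists>i<N. v $ i \<noteq> 0"
      proof (rule ccontr)
        assume "\<not> (\<exists>i<N. v $ i \<noteq> 0)"
        then have "v = 0\<^sub>v N" using v(1) by (intro eq_vecI) auto
        with v(2) show False by simp
      qed
      then obtain i where i: "i < N" "v $ i \<noteq> 0" by auto
      have "i div n < n" using i unfolding N_def by (simp add: less_mult_imp_div_less)
      moreover have "i mod n < n" using n1 by simp
      moreover have "y (i div n) (i mod n) = v $ i" unfolding y_def by simp
      ultimately show ?thesis using i by metis
    qed
    from C2[OF uz n1 mu Ey yz] have c2:
      "\<exists>a<n. y (n - 1) a \<noteq> 0"
      "\<forall>a<n. (\<Sum>b<n. l a b * y (n - 1) b) = mu * (y (n - 1) a - (\<Sum>b<n. u a b * y (n - 1) b))" by auto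
    define w where "w = vec n (\<lambda>a. y (n - 1) a)"
    have wc: "w \<in> carrier_vec n" unfolding w_def by simp
    have wz: "w \<noteq> 0\<^sub>v n"
    proof
      assume "w = 0\<^sub>v n"
      then have "\<forall>a<n. y (n - 1) a = 0" unfolding w_def by (metis index_vec index_zero_vec(1))
      with c2(1) show False by auto
    qed
    have "\<forall>a<n. (\<Sum>b<n. l a b * w $ b) = mu * (w $ a - (\<Sum>b<n. u a b * w $ b))"
    proof -
      have sw: "(\<Sum>b<n. f b * w $ b) = (\<Sum>b<n. f b * y (n - 1) b)" for f :: "nat \<Rightarrow> complex"
        by (rule sum.cong) (auto simp: w_def)
      have wa: "w $ a = y (n - 1) a" if "a < n" for a using that by (simp add: w_def)
      show ?thesis using c2(2) by (simp add: sw wa)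
    qed
    then have "map_mat complex_of_real L *\<^sub>v w = mu \<cdot>\<^sub>v (map_mat complex_of_real A' *\<^sub>v w)"
      using K2[OF wc] by simp
    then show "eigenvalue (map_mat complex_of_real (bGS n L U)) mu" using E2 wc wz by auto
  next
    assume "eigenvalue (map_mat complex_of_real (bGS n L U)) mu"
    then obtain w where w: "w \<in> carrier_vec n" "w \<noteq> 0\<^sub>v n"
      "map_mat complex_of_real L *\<^sub>v w = mu \<cdot>\<^sub>v (map_mat complex_of_real A' *\<^sub>v w)" using E2 by auto
    define t where "t = (\<lambda>a. w $ a)"
    have teq: "\<forall>a<n. (\<Sum>b<n. l a b * t b) = mu * (t a - (\<Sum>b<n. u a b * t b))"
      using K2[OF w(1)] w(3) unfolding t_def by simp
    define y where "y = (\<lambda>p a. mu * t a - (mu - 1) * (\<Sum>k<n-p. u a k * t k))"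
    have Ey: "EqS n u l mu y" using C1[OF uz n1 teq] unfolding y_def .
    define v where "v = vec N (\<lambda>i. y (i div n) (i mod n))"
    have vc: "v \<in> carrier_vec N" by (simp add: v_def)
    have vy: "v $ (q*n+b) = y q b" if "q < n" "b < n" for q b
      using idx_lt[OF that] that unfolding v_def N_def by simp
    have "EqS n u l mu (\<lambda>q b. v $ (q*n+b))" by (rule EqS_cong[OF Ey]) (simp add: vy)
    then have veq: "map_mat complex_of_real (calU n Bs) *\<^sub>v v = mu \<cdot>\<^sub>v (map_mat complex_of_real A *\<^sub>v v)"
      using K1[OF vc] by simp
    have vz: "v \<noteq> 0\<^sub>v N"
    proof
      assume v0: "v = 0\<^sub>v N"
      have "\<exists>a<n. w $ a \<noteq> 0"
      proof (rule ccontr)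
        assume "\<not> (\<exists>a<n. w $ a \<noteq> 0)"
        then have "w = 0\<^sub>v n" using w(1) by (intro eq_vecI) auto
        with w(2) show False by simp
      qed
      then obtain a where a: "a < n" "w $ a \<noteq> 0" by auto
      have n0: "n - 1 < n" using n1 by simp
      have "n - (n - 1) = 1" using n1 by simp
      then have "y (n - 1) a = mu * t a" unfolding y_def using uz[OF a(1), of 0] n1 by simp
      then have "v $ ((n - 1) * n + a) \<noteq> 0" using vy[OF n0 a(1)] a mu unfolding t_def by simp
      moreover have "(n - 1) * n + a < N" using idx_lt[OF n0 a(1)] unfolding N_def .
      ultimately show False using v0 by simp
    qed
    show "eigenvalue (map_mat complex_of_real (iter_mat n (futc_splitting n L U))) mu"
      using E1 vc vz veq by auto
  qed
qed

end
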